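(* Let $Q$ be an ice fork with point of return $r$, let $j\neq r$ be a mutable vertex, and let $k\ne j$ be another mutable vertex. If $k$ is red or green in $Q$, then $k$ is red or green in $\mu_j(Q)$.
   Context: A quiver is a finite directed multigraph with no loops and no oriented 2-cycles, whose vertex set is partitioned into mutable and frozen vertices; arrows between two frozen vertices are ignored. $b_{ik}$ = number of arrows $i\to k$ minus number of arrows $k\to i$; $Q|_S$ is the induced subquiver on $S$; $[n]$ is the set of mutable vertices. Mutation $\mu_j$ at mutable $j$: for each path $i\to j\to k$ add $b_{ij}b_{jk}$ arrows $i\to k$, reverse all arrows at $j$, cancel 2-cycles. Abundant: at least 2 arrows between every pair of vertices at least one of which is mutable. $F^+(r)=\{i: r\to i\}$, $F^-(r)=\{j:j\to r\}$. A fork is an abundant non-acyclic quiver with at most one frozen vertex and a vertex $r$ (point of return) such that $b_{ij}>b_{ri}$ and $b_{ij}>b_{jr}$ for all $i\in F^+(r),j\in F^-(r)$, and the subquivers induced on $F^+(r)$ and $F^-(r)$ are acyclic. An ice fork with point of return $r$ is a quiver with mutable vertices $[n]$ and frozen vertices $u_1,\dots,u_m$ ($m\ge1$) such that each $Q|_{[n]\cup\{u_i\}}$ is a fork with point of return $r$. A mutable vertex adjacent to at least one frozen vertex is red (resp. green) if all arrows between it and frozen vertices point towards (resp. away from) it. *)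

theory Defs
  imports Main
begin

text \<open>A quiver with mutable vertex set M and frozen vertex set F is encoded by its
  (skew-symmetric) exchange matrix b, where b i k = #arrows i->k minus #arrows k->i.
  Since there are no oriented 2-cycles, b determines the quiver. Arrows between two
  frozen vertices are ignored (b is 0 there).\<close>

definition is_quiver :: "'v set \<Rightarrow> 'v set \<Rightarrow> ('v \<Rightarrow> 'v \<Rightarrow> int) \<Rightarrow> bool" where
  "is_quiver M F b \<longleftrightarrow> finite M \<and> finite F \<and> M \<inter> F = {} \<and>
     (\<forall>i k. b i k = - b k i) \<and>
     (\<forall>i k. i \<notin> M \<union> F \<longrightarrow> b i k = 0) \<and>
     (\<forall>i k. i \<in> F \<and> k \<in> F \<longrightarrow> b i k = 0)"

definition restrict_b :: "('v \<Rightarrow> 'v \<Rightarrow> int) \<Rightarrow> 'v set \<Rightarrow> 'v \<Rightarrow> 'v \<Rightarrow> int" where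
  "restrict_b b S i k = (if i \<in> S \<and> k \<in> S then b i k else 0)"

definition arrows_on :: "('v \<Rightarrow> 'v \<Rightarrow> int) \<Rightarrow> 'v set \<Rightarrow> ('v \<times> 'v) set" where
  "arrows_on b S = {(i, k). i \<in> S \<and> k \<in> S \<and> b i k > 0}"

definition abundant :: "'v set \<Rightarrow> 'v set \<Rightarrow> ('v \<Rightarrow> 'v \<Rightarrow> int) \<Rightarrow> bool" where
  "abundant M F b \<longleftrightarrow> (\<forall>i \<in> M \<union> F. \<forall>k \<in> M \<union> F. i \<noteq> k \<and> (i \<in> M \<or> k \<in> M) \<longrightarrow> \<bar>b i k\<bar> \<ge> 2)"

definition Fplus :: "'v set \<Rightarrow> 'v set \<Rightarrow> ('v \<Rightarrow> 'v \<Rightarrow> int) \<Rightarrow> 'v \<Rightarrow> 'v set" where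
  "Fplus M F b r = {i \<in> M \<union> F. b r i > 0}"

definition Fminus :: "'v set \<Rightarrow> 'v set \<Rightarrow> ('v \<Rightarrow> 'v \<Rightarrow> int) \<Rightarrow> 'v \<Rightarrow> 'v set" where
  "Fminus M F b r = {j \<in> M \<union> F. b j r > 0}"

definition is_fork :: "'v set \<Rightarrow> 'v set \<Rightarrow> ('v \<Rightarrow> 'v \<Rightarrow> int) \<Rightarrow> 'v \<Rightarrow> bool" where
  "is_fork M F b r \<longleftrightarrow> is_quiver M F b \<and> abundant M F b \<and>
     \<not> acyclic (arrows_on b (M \<union> F)) \<and> card F \<le> 1 \<and> r \<in> M \<union> F \<and>
     (\<forall>i \<in> Fplus M F b r. \<forall>j \<in> Fminus M F b r. b i j > b r i \<and> b i j > b j r) \<and>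
     acyclic (arrows_on b (Fplus M F b r)) \<and> acyclic (arrows_on b (Fminus M F b r))"

definition is_ice_fork :: "'v set \<Rightarrow> 'v set \<Rightarrow> ('v \<Rightarrow> 'v \<Rightarrow> int) \<Rightarrow> 'v \<Rightarrow> bool" where
  "is_ice_fork M F b r \<longleftrightarrow> is_quiver M F b \<and> F \<noteq> {} \<and>
     (\<forall>u \<in> F. is_fork M {u} (restrict_b b (M \<union> {u})) r)"

definition mutate :: "'v set \<Rightarrow> 'v set \<Rightarrow> ('v \<Rightarrow> 'v \<Rightarrow> int) \<Rightarrow> 'v \<Rightarrow> 'v \<Rightarrow> 'v \<Rightarrow> int" where
  "mutate M F b j i k =
     (if i = j \<or> k = j then - b i k
      else if i \<in> F \<and> k \<in> F then 0
      else b i k + (\<bar>b i j\<bar> * b j k + b i j * \<bar>b j k\<bar>) div 2)"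

definition is_red :: "'v set \<Rightarrow> 'v set \<Rightarrow> ('v \<Rightarrow> 'v \<Rightarrow> int) \<Rightarrow> 'v \<Rightarrow> bool" where
  "is_red M F b k \<longleftrightarrow> k \<in> M \<and> (\<exists>u \<in> F. b k u \<noteq> 0) \<and> (\<forall>u \<in> F. b u k \<ge> 0)"

definition is_green :: "'v set \<Rightarrow> 'v set \<Rightarrow> ('v \<Rightarrow> 'v \<Rightarrow> int) \<Rightarrow> 'v \<Rightarrow> bool" where
  "is_green M F b k \<longleftrightarrow> k \<in> M \<and> (\<exists>u \<in> F. b k u \<noteq> 0) \<and> (\<forall>u \<in> F. b k u \<ge> 0)"

end

theory Submission
  imports Defs
begin

lemma cyc3: "(x,y) \<in> R \<Longrightarrow> (y,z) \<in> R \<Longrightarrow> (z,x) \<in> R \<Longrightarrow> \<not> acyclic R"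
proof -
  assume a: "(x,y) \<in> R" "(y,z) \<in> R" "(z,x) \<in> R"
  have "(x,x) \<in> R\<^sup>+" using a by (meson trancl.r_into_trancl trancl_into_trancl)
  thus ?thesis by (auto simp: acyclic_def)
qed

lemma fork_tri:
  assumes f: "is_fork V W c r"
    and xyz: "x \<in> V \<union> W" "y \<in> V \<union> W" "z \<in> V \<union> W"
    and d: "x \<noteq> y" "y \<noteq> z" "z \<noteq> x"
    and e: "c x y > 0" "c y z > 0" "c z x > 0"
  shows "r \<in> {x,y,z}"
proof (rule ccontr)
  assume nr: "r \<notin> {x,y,z}"
  have q: "is_quiver V W c" and ab: "abundant V W c" and cW: "card W \<le> 1"
    and rV: "r \<in> V \<union> W"
    and ineq: "\<forall>i \<in> Fplus V W c r. \<forall>j \<in> Fminus V W c r. c i j > c r i \<and> c i j > c j r"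
    and ap: "acyclic (arrows_on c (Fplus V W c r))"
    and am: "acyclic (arrows_on c (Fminus V W c r))"
    using f unfolding is_fork_def by auto
  have skew: "\<And>i k. c i k = - c k i" using q unfolding is_quiver_def by blast
  have fin: "finite W" using q unfolding is_quiver_def by blast
  have disj: "V \<inter> W = {}" using q unfolding is_quiver_def by blast
  have pm: "v \<in> Fplus V W c r \<or> v \<in> Fminus V W c r" if v: "v \<in> V \<union> W" "v \<noteq> r" for v
  proof -
    have "v \<in> V \<or> r \<in> V"
    proof (rule ccontr)
      assume "\<not> (v \<in> V \<or> r \<in> V)"
      hence "v \<in> W" "r \<in> W" using v rV by auto
      hence "card {v,r} \<le> card W" using fin by (intro card_mono) auto
      moreover have "card {v,r} = 2" using v(2) by simp
      ultimately have "card W \<ge> 2" by simp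
      thus False using cW by auto
    qed
    hence "\<bar>c r v\<bar> \<ge> 2" using ab v rV unfolding abundant_def by auto
    hence "c r v > 0 \<or> c v r > 0" using skew[of v r] by auto
    thus ?thesis using v rV unfolding Fplus_def Fminus_def by auto
  qed
  have no: "\<not> c i j > 0" if "i \<in> Fminus V W c r" "j \<in> Fplus V W c r" for i j
    using ineq that skew[of i j] unfolding Fplus_def by fastforce
  have px: "x \<in> Fplus V W c r \<or> x \<in> Fminus V W c r" using pm xyz nr by auto
  have py: "y \<in> Fplus V W c r \<or> y \<in> Fminus V W c r" using pm xyz nr by auto
  have pz: "z \<in> Fplus V W c r \<or> z \<in> Fminus V W c r" using pm xyz nr by auto
  show False
  proof -
    { assume "x \<in> Fplus V W c r" "y \<in> Fplus V W c r" "z \<in> Fplus V W c r"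
      hence False using cyc3[of x y "arrows_on c (Fplus V W c r)" z] ap e
        unfolding arrows_on_def by auto }
    moreover
    { assume "x \<in> Fminus V W c r" "y \<in> Fminus V W c r" "z \<in> Fminus V W c r"
      hence False using cyc3[of x y "arrows_on c (Fminus V W c r)" z] am e
        unfolding arrows_on_def by auto }
    ultimately show False using px py pz no e by blast
  qed
qed

lemma rb: "x \<in> S \<Longrightarrow> y \<in> S \<Longrightarrow> restrict_b b S x y = b x y"
  by (simp add: restrict_b_def)

lemma ice_fork_u: "is_ice_fork M F b r \<Longrightarrow> u \<in> F \<Longrightarrow> is_fork M {u} (restrict_b b (M \<union> {u})) r"
  by (simp add: is_ice_fork_def)

lemma ice_r: "is_ice_fork M F b r \<Longrightarrow> u \<in> F \<Longrightarrow> r \<in> M \<union> {u}"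
  using ice_fork_u unfolding is_fork_def by fastforce

lemma ice_abund:
  assumes "is_ice_fork M F b r" "u \<in> F" "x \<in> M \<union> {u}" "y \<in> M \<union> {u}" "x \<noteq> y" "x \<in> M \<or> y \<in> M"
  shows "\<bar>b x y\<bar> \<ge> 2"
proof -
  have "abundant M {u} (restrict_b b (M \<union> {u}))" using ice_fork_u[OF assms(1,2)]
    unfolding is_fork_def by auto
  hence "\<bar>restrict_b b (M \<union> {u}) x y\<bar> \<ge> 2" using assms(3-) unfolding abundant_def by blast
  thus ?thesis using rb[OF assms(3,4)] by simp
qed

lemma ice_ineq:
  assumes "is_ice_fork M F b r" "u \<in> F" "i \<in> M \<union> {u}" "j \<in> M \<union> {u}" "b r i > 0" "b j r > 0"
  shows "b i j > b r i \<and> b i j > b j r"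
proof -
  have f: "is_fork M {u} (restrict_b b (M \<union> {u})) r" using ice_fork_u[OF assms(1,2)] .
  have r: "r \<in> M \<union> {u}" using ice_r[OF assms(1,2)] .
  have "i \<in> Fplus M {u} (restrict_b b (M \<union> {u})) r" "j \<in> Fminus M {u} (restrict_b b (M \<union> {u})) r"
    using assms r unfolding Fplus_def Fminus_def by (auto simp: rb)
  hence "restrict_b b (M \<union> {u}) r i < restrict_b b (M \<union> {u}) i j \<and>
     restrict_b b (M \<union> {u}) j r < restrict_b b (M \<union> {u}) i j" using f unfolding is_fork_def by blast
  thus ?thesis using assms r by (simp add: rb)
qed

lemma ice_tri:
  assumes "is_ice_fork M F b r" "u \<in> F" "x \<in> M \<union> {u}" "y \<in> M \<union> {u}" "z \<in> M \<union> {u}"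
    "x \<noteq> y" "y \<noteq> z" "z \<noteq> x" "b x y > 0" "b y z > 0" "b z x > 0"
  shows "r \<in> {x,y,z}"
  using fork_tri[OF ice_fork_u[OF assms(1,2)] assms(3-8)] assms(3-) by (simp add: rb)

definition fm :: "int \<Rightarrow> int \<Rightarrow> int" where "fm x y = (\<bar>x\<bar> * y + x * \<bar>y\<bar>) div 2"

lemma fm_eq: "fm x y = (if x > 0 \<and> y > 0 then x * y else if x < 0 \<and> y < 0 then - (x * y) else 0)"
proof -
  have "\<bar>x\<bar> * y + x * \<bar>y\<bar> = (if x > 0 \<and> y > 0 then 2 * (x * y) else if x < 0 \<and> y < 0 then 2 * (- (x * y)) else 0)"
    by (auto simp: abs_if algebra_simps)
  moreover have "\<And>z::int. (- (2 * z)) div 2 = - z" by presburger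
  ultimately show ?thesis unfolding fm_def by simp
qed

lemma fm_nonneg: "0 < x \<Longrightarrow> 0 \<le> fm x y"
  by (simp add: fm_eq zero_le_mult_iff)

lemma fm_nonpos: "x < 0 \<Longrightarrow> fm x y \<le> 0"
  by (simp add: fm_eq zero_le_mult_iff)

lemma mut_ku:
  assumes q: "is_quiver M F b" and "u \<in> F" "j \<in> M" "k \<in> M" "k \<noteq> j"
  shows "mutate M F b j k u = b k u + fm (b k j) (b j u)"
    and "mutate M F b j u k = - (b k u + fm (b k j) (b j u))"
proof -
  have skew: "\<And>i k. b i k = - b k i" using q unfolding is_quiver_def by blast
  have d: "M \<inter> F = {}" using q unfolding is_quiver_def by blast
  have uj: "u \<noteq> j" "k \<notin> F" using assms d by auto
  show "mutate M F b j k u = b k u + fm (b k j) (b j u)"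
    using uj assms unfolding mutate_def fm_def by auto
  have "mutate M F b j u k = b u k + fm (b u j) (b j k)"
    using uj assms unfolding mutate_def fm_def by auto
  also have "\<dots> = - (b k u + fm (b k j) (b j u))"
    using skew[of u k] skew[of u j] skew[of j k] by (auto simp: fm_eq)
  finally show "mutate M F b j u k = - (b k u + fm (b k j) (b j u))" .
qed

lemma red_new:
  assumes q: "is_quiver M F b" "F \<noteq> {}" "j \<in> M" "k \<in> M" "k \<noteq> j"
    and neg: "\<And>u. u \<in> F \<Longrightarrow> b k u + fm (b k j) (b j u) < 0"
  shows "is_red M F (mutate M F b j) k"
proof -
  obtain u0 where "u0 \<in> F" using assms by auto
  thus ?thesis unfolding is_red_def using mut_ku[OF q(1) _ q(3-5)] neg q
    by (metis less_irrefl neg_0_le_iff_le order_less_imp_le)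
qed

lemma green_new:
  assumes q: "is_quiver M F b" "F \<noteq> {}" "j \<in> M" "k \<in> M" "k \<noteq> j"
    and pos: "\<And>u. u \<in> F \<Longrightarrow> b k u + fm (b k j) (b j u) > 0"
  shows "is_green M F (mutate M F b j) k"
proof -
  obtain u0 where "u0 \<in> F" using assms by auto
  thus ?thesis unfolding is_green_def using mut_ku[OF q(1) _ q(3-5)] pos q
    by (metis less_irrefl order_less_imp_le)
qed

theorem mainTheorem6:
  fixes M F :: "'v set" and b :: "'v \<Rightarrow> 'v \<Rightarrow> int" and r j k :: 'v
  assumes "is_ice_fork M F b r"
    and "j \<in> M" and "j \<noteq> r"
    and "k \<in> M" and "k \<noteq> j"
    and "is_red M F b k \<or> is_green M F b k"
  shows "is_red M F (mutate M F b j) k \<or> is_green M F (mutate M F b j) k"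
proof -
  note ice = assms(1)
  have q: "is_quiver M F b" and Fne: "F \<noteq> {}" using ice unfolding is_ice_fork_def by auto
  have skew: "\<And>i k. b i k = - b k i" using q unfolding is_quiver_def by blast
  have disj: "M \<inter> F = {}" using q unfolding is_quiver_def by blast
  obtain u0 where u0: "u0 \<in> F" using Fne by auto
  have ku2: "\<bar>b k u\<bar> \<ge> 2" if "u \<in> F" for u
    using ice_abund[OF ice that, of k u] that assms disj by auto
  have ju2: "\<bar>b j u\<bar> \<ge> 2" if "u \<in> F" for u
    using ice_abund[OF ice that, of j u] that assms disj by auto
  have kj2: "\<bar>b k j\<bar> \<ge> 2"
    using ice_abund[OF ice u0, of k j] assms by auto
  have uM: "u \<notin> M" if "u \<in> F" for u using that disj by auto
  have onlyu: "F = {u}" if "u \<in> F" "r = u" for u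
  proof -
    have "v = u" if "v \<in> F" for v
    proof -
      have "u \<in> M \<union> {v}" using ice_r[OF ice that] \<open>r = u\<close> by simp
      moreover have "u \<notin> M" using \<open>u \<in> F\<close> disj by blast
      ultimately show ?thesis by blast
    qed
    thus ?thesis using \<open>u \<in> F\<close> by blast
  qed
  note RN = red_new[OF q Fne assms(2,4,5)]
  note GN = green_new[OF q Fne assms(2,4,5)]
  from assms(6) show ?thesis
  proof
    assume red: "is_red M F b k"
    have neg: "b k u \<le> -2" if "u \<in> F" for u
      using red ku2[OF that] that skew[of u k] unfolding is_red_def by auto
    show ?thesis
    proof (cases "b k j < 0")
      case True
      have "b k u + fm (b k j) (b j u) < 0" if "u \<in> F" for u
        using neg[OF that] fm_nonpos[OF True, of "b j u"] by linarith
      thus ?thesis using RN by blast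
    next
      case False
      hence kjp: "b k j \<ge> 2" using kj2 by auto
      show ?thesis
      proof (cases "\<exists>u\<in>F. b j u > 0")
        case False
        have "b k u + fm (b k j) (b j u) < 0" if "u \<in> F" for u
          using neg[OF that] False that kjp by (auto simp: fm_eq)
        thus ?thesis using RN by blast
      next
        case True
        then obtain v where v: "v \<in> F" "b j v > 0" by auto
        have "r \<in> {k,j,v}"
          using ice_tri[OF ice v(1), of k j v] assms v neg[OF v(1)] kjp uM[OF v(1)] skew[of v k]
          by auto
        hence "r = k \<or> r = v" using assms by auto
        thus ?thesis
        proof
          assume rk: "r = k"
          have "b k u + fm (b k j) (b j u) > 0" if u: "u \<in> F" for u
          proof -
            have "b j u > b k j \<and> b j u > b u k"
              using ice_ineq[OF ice u, of j u] rk assms kjp neg[OF u] skew[of u k] by auto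
            moreover have "b k j * b j u \<ge> 2 * b j u"
              using kjp \<open>b j u > b k j \<and> b j u > b u k\<close> by (intro mult_right_mono) auto
            ultimately have A: "b j u > b k j \<and> b j u > b u k" and P: "b k j * b j u \<ge> 2 * b j u" by blast+
            have fmv: "fm (b k j) (b j u) = b k j * b j u" using kjp A by (simp add: fm_eq)
            show ?thesis using A P fmv skew[of u k] neg[OF u] by linarith
          qed
          thus ?thesis using GN by blast
        next
          assume rv: "r = v"
          have "b k u + fm (b k j) (b j u) > 0" if u: "u \<in> F" for u
          proof -
            have uv: "u = v" using onlyu[OF v(1) rv] u by auto
            have "b k j > b v k \<and> b k j > b j v"
              using ice_ineq[OF ice v(1), of k j] rv assms v neg[OF v(1)] skew[of v k] by auto
            moreover have "b k j * b j v \<ge> b k j * 2"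
              using kjp ju2[OF v(1)] v by (intro mult_left_mono) auto
            ultimately have A: "b k j > b v k \<and> b k j > b j v" and P: "b k j * b j v \<ge> b k j * 2" by blast+
            have fmv: "fm (b k j) (b j v) = b k j * b j v" using kjp v by (simp add: fm_eq)
            show ?thesis unfolding uv using A P fmv skew[of v k] neg[OF v(1)] by linarith
          qed
          thus ?thesis using GN by blast
        qed
      qed
    qed
  next
    assume green: "is_green M F b k"
    have pos: "b k u \<ge> 2" if "u \<in> F" for u
      using green ku2[OF that] that unfolding is_green_def by auto
    show ?thesis
    proof (cases "b k j > 0")
      case True
      have "b k u + fm (b k j) (b j u) > 0" if "u \<in> F" for u
        using pos[OF that] fm_nonneg[OF True, of "b j u"] by linarith
      thus ?thesis using GN by blast
    next
      case False
      hence kjn: "b j k \<ge> 2" using kj2 skew[of j k] by auto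
      show ?thesis
      proof (cases "\<exists>u\<in>F. b j u < 0")
        case False
        have "b k u + fm (b k j) (b j u) > 0" if "u \<in> F" for u
          using pos[OF that] False that kjn skew[of j k] by (auto simp: fm_eq)
        thus ?thesis using GN by blast
      next
        case True
        then obtain v where v: "v \<in> F" "b j v < 0" by auto
        have "r \<in> {k,v,j}"
          using ice_tri[OF ice v(1), of k v j] assms v pos[OF v(1)] kjn uM[OF v(1)] skew[of v j]
          by auto
        hence "r = k \<or> r = v" using assms by auto
        thus ?thesis
        proof
          assume rk: "r = k"
          have "b k u + fm (b k j) (b j u) < 0" if u: "u \<in> F" for u
          proof -
            have "b u j > b k u \<and> b u j > b j k"
              using ice_ineq[OF ice u, of u j] rk assms kjn pos[OF u] by auto
            moreover have "b j k * b u j \<ge> 2 * b u j"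
              using kjn \<open>b u j > b k u \<and> b u j > b j k\<close> by (intro mult_right_mono) auto
            ultimately have A: "b u j > b k u \<and> b u j > b j k" and P: "b j k * b u j \<ge> 2 * b u j" by blast+
            have e: "b k j * b j u = b j k * b u j" using skew[of k j] skew[of j u] by simp
            have fmv: "fm (b k j) (b j u) = - (b k j * b j u)"
              using kjn A skew[of k j] skew[of j u] by (simp add: fm_eq)
            show ?thesis using A P fmv e pos[OF u] by linarith
          qed
          thus ?thesis using RN by blast
        next
          assume rv: "r = v"
          have "b k u + fm (b k j) (b j u) < 0" if u: "u \<in> F" for u
          proof -
            have uv: "u = v" using onlyu[OF v(1) rv] u by auto
            have "b j k > b v j \<and> b j k > b k v"
              using ice_ineq[OF ice v(1), of j k] rv assms v pos[OF v(1)] skew[of v j] by auto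
            moreover have "b j k * b v j \<ge> b j k * 2"
              using kjn ju2[OF v(1)] v skew[of v j] by (intro mult_left_mono) auto
            ultimately have A: "b j k > b v j \<and> b j k > b k v" and P: "b j k * b v j \<ge> b j k * 2" by blast+
            have e: "b k j * b j v = b j k * b v j" using skew[of k j] skew[of j v] by simp
            have fmv: "fm (b k j) (b j v) = - (b k j * b j v)"
              using kjn v skew[of k j] by (simp add: fm_eq)
            show ?thesis unfolding uv using A P fmv e pos[OF v(1)] by linarith
          qed
          thus ?thesis using RN by blast
        qed
      qed
    qed
  qed
qed

end
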